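(* Consider a finite-horizon tabular MDP with stationary transition kernel $P$, $S$ states, $A$ actions, horizon $H$, and $m$ i.i.d. episodes from behavior policy $\mu$; for each $t\in[H]$ let $V^{\rm in}_{t+1}:\mathcal S\to[0,H]$ be fixed (not depending on the data). With $n_{s,a}=\sum_{i=1}^m\sum_{u=1}^H\mathbf 1[s^{(i)}_u=s,a^{(i)}_u=a]$, define $\tilde\sigma_{V^{\rm in}_{t+1}}(s,a)=\sigma_{V^{\rm in}_{t+1}}(s,a)$ if $n_{s,a}\le\frac12m\sum_{t=1}^Hd^\mu_t(s,a)$, and otherwise \[ \tilde\sigma_{V^{\rm in}_{t+1}}(s,a)=\frac1{n_{s,a}}\sum_{i=1}^m\sum_{u=1}^H[V^{\rm in}_{t+1}(s^{(i)}_{u+1})]^2\mathbf 1[s^{(i)}_u=s,a^{(i)}_u=a]-\tilde z_t(s,a)^2, \] where $\tilde z_t(s,a)=\frac1{n_{s,a}}\sum_{i=1}^m\sum_{u=1}^HV^{\rm in}_{t+1}(s^{(i)}_{u+1})\mathbf 1[s^{(i)}_u=s,a^{(i)}_u=a]$. Then with probability at least $1-\delta$, for all $t\in[H]$ and $(s,a)$ with $\sum_td^\mu_t(s,a)>0$, \[ \big|\tilde\sigma_{V^{\rm in}_{t+1}}(s,a)-\sigma_{V^{\rm in}_{t+1}}(s,a)\big|\le6H^2\sqrt{\frac{\log(4HSA/\delta)}{m\sum_{t=1}^Hd^\mu_t(s,a)}}+\frac{4H^2\log(4HSA/\delta)}{m\sum_{t=1}^Hd^\mu_t(s,a)}. 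\]
   Context: Episodes: $s_1\sim d_1$, $a_u\sim\mu_u(\cdot|s_u)$, $s_{u+1}\sim P(\cdot|s_u,a_u)$. $d^\mu_t(s,a)=\mathbb P^\mu(s_t=s,a_t=a)$. $\sigma_V(s,a)=\mathrm{Var}_{s'\sim P(\cdot|s,a)}[V(s')]$. $\delta\in(0,1)$. *)

theory Defs
  imports "HOL-Probability.Probability"
begin

text \<open>An episode is a pair (tr, sf): tr ! (u-1) = (s_u, a_u) for u = 1..H, sf = s_{H+1}.\<close>
type_synonym ('s, 'a) episode = "('s \<times> 'a) list \<times> 's"

fun gen_traj :: "('s \<Rightarrow> 'a \<Rightarrow> 's pmf) \<Rightarrow> (nat \<Rightarrow> 's \<Rightarrow> 'a pmf) \<Rightarrow> nat \<Rightarrow> nat \<Rightarrow> 's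
                  \<Rightarrow> ('s, 'a) episode pmf" where
  "gen_traj P \<mu> u 0 s = return_pmf ([], s)"
| "gen_traj P \<mu> u (Suc k) s =
     do { a \<leftarrow> \<mu> u s; s' \<leftarrow> P s a; r \<leftarrow> gen_traj P \<mu> (Suc u) k s';
          return_pmf ((s, a) # fst r, snd r) }"

definition episode_pmf :: "'s pmf \<Rightarrow> ('s \<Rightarrow> 'a \<Rightarrow> 's pmf) \<Rightarrow> (nat \<Rightarrow> 's \<Rightarrow> 'a pmf) \<Rightarrow> nat
                            \<Rightarrow> ('s, 'a) episode pmf" where
  "episode_pmf d1 P \<mu> H = do { s \<leftarrow> d1; gen_traj P \<mu> 1 H s }"

definition ep_state :: "('s, 'a) episode \<Rightarrow> nat \<Rightarrow> 's" where
  "ep_state ep u = (if u - 1 < length (fst ep) then fst (fst ep ! (u - 1)) else snd ep)"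

definition ep_action :: "('s, 'a) episode \<Rightarrow> nat \<Rightarrow> 'a" where
  "ep_action ep u = snd (fst ep ! (u - 1))"

definition data_pmf :: "'s pmf \<Rightarrow> ('s \<Rightarrow> 'a \<Rightarrow> 's pmf) \<Rightarrow> (nat \<Rightarrow> 's \<Rightarrow> 'a pmf) \<Rightarrow> nat \<Rightarrow> nat
                         \<Rightarrow> (nat \<Rightarrow> ('s, 'a) episode) pmf" where
  "data_pmf d1 P \<mu> H m = Pi_pmf {..<m} undefined (\<lambda>_. episode_pmf d1 P \<mu> H)"

definition occ :: "'s pmf \<Rightarrow> ('s \<Rightarrow> 'a \<Rightarrow> 's pmf) \<Rightarrow> (nat \<Rightarrow> 's \<Rightarrow> 'a pmf) \<Rightarrow> nat
                   \<Rightarrow> nat \<Rightarrow> 's \<Rightarrow> 'a \<Rightarrow> real" where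
  "occ d1 P \<mu> H t s a =
     measure_pmf.prob (episode_pmf d1 P \<mu> H) {ep. ep_state ep t = s \<and> ep_action ep t = a}"

definition sigmaV :: "('s \<Rightarrow> 'a \<Rightarrow> 's pmf) \<Rightarrow> ('s \<Rightarrow> real) \<Rightarrow> 's \<Rightarrow> 'a \<Rightarrow> real" where
  "sigmaV P V s a = measure_pmf.variance (P s a) V"

definition visit_count :: "nat \<Rightarrow> nat \<Rightarrow> (nat \<Rightarrow> ('s, 'a) episode) \<Rightarrow> 's \<Rightarrow> 'a \<Rightarrow> nat" where
  "visit_count H m D s a =
     card {(i, u). i < m \<and> u \<in> {1..H} \<and> ep_state (D i) u = s \<and> ep_action (D i) u = a}"

definition emp_moment :: "nat \<Rightarrow> nat \<Rightarrow> (nat \<Rightarrow> ('s, 'a) episode) \<Rightarrow> ('s \<Rightarrow> real) \<Rightarrow> nat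
                          \<Rightarrow> 's \<Rightarrow> 'a \<Rightarrow> real" where
  "emp_moment H m D V k s a =
     (\<Sum>i<m. \<Sum>u=1..H. (if ep_state (D i) u = s \<and> ep_action (D i) u = a
                          then V (ep_state (D i) (Suc u)) ^ k else 0)) / real (visit_count H m D s a)"

definition sigma_tilde :: "'s pmf \<Rightarrow> ('s \<Rightarrow> 'a \<Rightarrow> 's pmf) \<Rightarrow> (nat \<Rightarrow> 's \<Rightarrow> 'a pmf) \<Rightarrow> nat \<Rightarrow> nat
                           \<Rightarrow> (nat \<Rightarrow> ('s, 'a) episode) \<Rightarrow> ('s \<Rightarrow> real) \<Rightarrow> 's \<Rightarrow> 'a \<Rightarrow> real" where
  "sigma_tilde d1 P \<mu> H m D V s a =
     (if real (visit_count H m D s a) \<le> 1/2 * real m * (\<Sum>t=1..H. occ d1 P \<mu> H t s a)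
      then sigmaV P V s a
      else emp_moment H m D V 2 s a - (emp_moment H m D V 1 s a)\<^sup>2)"

end

theory Submission
  imports Defs
begin

lemma ep_state_Cons: "j \<ge> 1 \<Longrightarrow> ep_state (x # tr, sf) (Suc j) = ep_state (tr, sf) j"
  by (cases j) (auto simp: ep_state_def)

lemma ep_action_Cons: "j \<ge> 1 \<Longrightarrow> ep_action (x # tr, sf) (Suc j) = ep_action (tr, sf) j"
  by (cases j) (auto simp: ep_action_def)

lemma ep_state_1: "ep_state (x # tr, sf) 1 = fst x" by (simp add: ep_state_def)
lemma ep_action_1: "ep_action (x # tr, sf) 1 = snd x" by (simp add: ep_action_def)
lemma ep_state_1': "ep_state (x # tr, sf) (Suc 0) = fst x" by (simp add: ep_state_def)
lemma ep_action_1': "ep_action (x # tr, sf) (Suc 0) = snd x" by (simp add: ep_action_def)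

lemma gen_traj_first: "r \<in> set_pmf (gen_traj P \<mu> u k s) \<Longrightarrow> ep_state r 1 = s"
  by (cases k) (auto simp: ep_state_def)

lemma sum_split1: "(\<Sum>j=1..Suc k. f j) = (f 1::real) + (\<Sum>j=1..k. f (Suc j))"
proof -
  have "(\<Sum>j=1..Suc k. f j) = f 1 + (\<Sum>j=Suc 1..Suc k. f j)"
    by (rule sum.atLeast_Suc_atMost) simp
  also have "(\<Sum>j=Suc 1..Suc k. f j) = (\<Sum>j=1..k. f (Suc j))"
    by (rule sum.shift_bounds_cl_Suc_ivl)
  finally show ?thesis .
qed

definition Fsum :: "'s \<Rightarrow> 'a \<Rightarrow> ('s \<Rightarrow> real) \<Rightarrow> nat \<Rightarrow> ('s,'a) episode \<Rightarrow> real" where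
  "Fsum s0 a0 h k ep = (\<Sum>j=1..k. if ep_state ep j = s0 \<and> ep_action ep j = a0 then h (ep_state ep (Suc j)) else 0)"

lemma Fsum_Cons:
  assumes "ep_state r 1 = s'"
  shows "Fsum s0 a0 h (Suc k) ((s,a) # fst r, snd r) =
     (if s = s0 \<and> a = a0 then h s' else 0) + Fsum s0 a0 h k r"
proof -
  have "Fsum s0 a0 h (Suc k) ((s,a) # fst r, snd r) =
     (if ep_state ((s,a) # fst r, snd r) 1 = s0 \<and> ep_action ((s,a) # fst r, snd r) 1 = a0
        then h (ep_state ((s,a) # fst r, snd r) (Suc 1)) else 0) +
     (\<Sum>j=1..k. if ep_state ((s,a) # fst r, snd r) (Suc j) = s0 \<and> ep_action ((s,a) # fst r, snd r) (Suc j) = a0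
        then h (ep_state ((s,a) # fst r, snd r) (Suc (Suc j))) else 0)"
    unfolding Fsum_def by (rule sum_split1)
  also have "\<dots> = (if s = s0 \<and> a = a0 then h s' else 0) + Fsum s0 a0 h k r"
  proof -
    have e: "ep_state ((s,a) # fst r, snd r) (Suc 1) = s'"
      using assms ep_state_Cons[of 1 "(s,a)" "fst r" "snd r"] by simp
    have t2: "(\<Sum>j=1..k. if ep_state ((s,a) # fst r, snd r) (Suc j) = s0 \<and> ep_action ((s,a) # fst r, snd r) (Suc j) = a0
        then h (ep_state ((s,a) # fst r, snd r) (Suc (Suc j))) else 0) = Fsum s0 a0 h k r"
      unfolding Fsum_def
      by (rule sum.cong) (auto simp: ep_state_Cons ep_action_Cons)
    show ?thesis by (simp only: ep_state_1 ep_action_1 fst_conv snd_conv e t2)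
  qed
  finally show ?thesis .
qed

lemma gen_traj_exp:
  fixes P :: "'s \<Rightarrow> 'a \<Rightarrow> 's pmf" and \<mu> :: "nat \<Rightarrow> 's \<Rightarrow> 'a pmf"
  assumes h: "nn_integral (P s0 a0) (\<lambda>s'. ennreal (exp (h s'))) \<le> 1"
  shows "nn_integral (gen_traj P \<mu> u k s) (\<lambda>ep. ennreal (exp (Fsum s0 a0 h k ep))) \<le> 1"
proof (induction k arbitrary: u s)
  case 0
  then show ?case by (simp add: Fsum_def)
next
  case (Suc k)
  have "nn_integral (gen_traj P \<mu> u (Suc k) s) (\<lambda>ep. ennreal (exp (Fsum s0 a0 h (Suc k) ep))) =
     (\<integral>\<^sup>+a. \<integral>\<^sup>+s'. \<integral>\<^sup>+r. ennreal (exp (Fsum s0 a0 h (Suc k) ((s,a) # fst r, snd r)))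
        \<partial>gen_traj P \<mu> (Suc u) k s' \<partial>P s a \<partial>\<mu> u s)"
    by simp
  also have "\<dots> = (\<integral>\<^sup>+a. \<integral>\<^sup>+s'. ennreal (exp (if s = s0 \<and> a = a0 then h s' else 0)) *
        \<integral>\<^sup>+r. ennreal (exp (Fsum s0 a0 h k r)) \<partial>gen_traj P \<mu> (Suc u) k s' \<partial>P s a \<partial>\<mu> u s)"
    apply (intro nn_integral_cong)
    apply (subst nn_integral_cmult[symmetric], simp)
    apply (intro nn_integral_cong_AE)
    apply (rule AE_pmfI)
    subgoal premises prems for a s' r
      using Fsum_Cons[OF gen_traj_first[OF prems(3)], of s0 a0 h k s a]
      by (simp only: exp_add ennreal_mult exp_ge_zero)
    done
  also have "\<dots> \<le> (\<integral>\<^sup>+a. \<integral>\<^sup>+s'. ennreal (exp (if s = s0 \<and> a = a0 then h s' else 0)) \<partial>P s a \<partial>\<mu> u s)"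
    apply (intro nn_integral_mono)
    using Suc.IH mult_left_mono[of _ 1] by (metis mult.right_neutral zero_le)
  also have "\<dots> \<le> (\<integral>\<^sup>+a. 1 \<partial>\<mu> u s)"
    apply (intro nn_integral_mono)
    subgoal for a
      apply (cases "s = s0 \<and> a = a0")
      using h by (auto simp: measure_pmf.emeasure_space_1)
    done
  also have "\<dots> = 1" by (simp add: measure_pmf.emeasure_space_1)
  finally show ?case .
qed


lemma episode_exp:
  fixes P :: "'s \<Rightarrow> 'a \<Rightarrow> 's pmf" and \<mu> :: "nat \<Rightarrow> 's \<Rightarrow> 'a pmf"
  assumes h: "nn_integral (P s0 a0) (\<lambda>s'. ennreal (exp (h s'))) \<le> 1"
  shows "nn_integral (episode_pmf d1 P \<mu> H) (\<lambda>ep. ennreal (exp (Fsum s0 a0 h H ep))) \<le> 1"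
proof -
  have "nn_integral (episode_pmf d1 P \<mu> H) (\<lambda>ep. ennreal (exp (Fsum s0 a0 h H ep)))
     = (\<integral>\<^sup>+s. nn_integral (gen_traj P \<mu> 1 H s) (\<lambda>ep. ennreal (exp (Fsum s0 a0 h H ep))) \<partial>d1)"
    by (simp add: episode_pmf_def)
  also have "\<dots> \<le> (\<integral>\<^sup>+s. 1 \<partial>d1)"
    by (intro nn_integral_mono gen_traj_exp[where P=P and ?s0.0=s0 and ?a0.0=a0 and h=h, OF h])
  also have "\<dots> = 1" by (simp add: measure_pmf.emeasure_space_1)
  finally show ?thesis .
qed

lemma data_exp:
  fixes P :: "'s \<Rightarrow> 'a \<Rightarrow> 's pmf" and \<mu> :: "nat \<Rightarrow> 's \<Rightarrow> 'a pmf"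
  assumes h: "nn_integral (P s0 a0) (\<lambda>s'. ennreal (exp (h s'))) \<le> 1"
  shows "nn_integral (data_pmf d1 P \<mu> H m) (\<lambda>D. ennreal (exp (\<Sum>i<m. Fsum s0 a0 h H (D i)))) \<le> 1"
proof -
  have "nn_integral (data_pmf d1 P \<mu> H m) (\<lambda>D. ennreal (exp (\<Sum>i<m. Fsum s0 a0 h H (D i))))
     = nn_integral (data_pmf d1 P \<mu> H m) (\<lambda>D. \<Prod>i\<in>{..<m}. (\<lambda>i ep. ennreal (exp (Fsum s0 a0 h H ep))) i (D i))"
    by (simp add: exp_sum prod_ennreal)
  also have "\<dots> = (\<Prod>i\<in>{..<m}. nn_integral (episode_pmf d1 P \<mu> H) (\<lambda>ep. ennreal (exp (Fsum s0 a0 h H ep))))"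
    unfolding data_pmf_def by (rule nn_integral_prod_Pi_pmf) simp
  also have "\<dots> \<le> 1"
    using episode_exp[where P=P and ?s0.0=s0 and ?a0.0=a0 and h=h, OF h]
    by (simp add: power_le_one)
  finally show ?thesis .
qed

lemma tail:
  fixes P :: "'s \<Rightarrow> 'a \<Rightarrow> 's pmf" and \<mu> :: "nat \<Rightarrow> 's \<Rightarrow> 'a pmf" and g :: "'s \<Rightarrow> real"
  assumes g: "\<And>s. 0 \<le> g s \<and> g s \<le> c" and c: "c > 0" and e: "\<epsilon> > 0"
  shows "measure_pmf.prob (data_pmf d1 P \<mu> H m)
     {D. k0 \<le> (\<Sum>i<m. \<Sum>u=1..H. if ep_state (D i) u = s0 \<and> ep_action (D i) u = a0 then 1 else 0)
       \<and> (\<Sum>i<m. \<Sum>u=1..H. if ep_state (D i) u = s0 \<and> ep_action (D i) u = a0 then 1 else 0) * \<epsilon>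
          \<le> (\<Sum>i<m. \<Sum>u=1..H. if ep_state (D i) u = s0 \<and> ep_action (D i) u = a0
                 then g (ep_state (D i) (Suc u)) - measure_pmf.expectation (P s0 a0) g else 0)}
     \<le> exp (- (k0 * (2 * \<epsilon>\<^sup>2 / c\<^sup>2)))"
proof -
  define N where "N D = (\<Sum>i<m. \<Sum>u=1..H. if ep_state (D i) u = s0 \<and> ep_action (D i) u = a0 then 1 else (0::real))" for D
  define E where "E = measure_pmf.expectation (P s0 a0) g"
  define Y where "Y D = (\<Sum>i<m. \<Sum>u=1..H. if ep_state (D i) u = s0 \<and> ep_action (D i) u = a0
                 then g (ep_state (D i) (Suc u)) - E else 0)" for D
  define l where "l = 4 * \<epsilon> / c\<^sup>2"
  define b where "b = 2 * \<epsilon>\<^sup>2 / c\<^sup>2"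
  define h where "h s' = l * (g s' - E) - b" for s'
  have l0: "l > 0" using c e by (simp add: l_def)
  have b0: "b \<ge> 0" by (simp add: b_def)
  interpret ib: interval_bounded_random_variable "measure_pmf (P s0 a0)" g 0 c
    by unfold_locales (use g in auto)
  have hoef: "nn_integral (P s0 a0) (\<lambda>x. exp (l * (g x - E))) \<le> ennreal (exp (l\<^sup>2 * (c - 0)\<^sup>2 / 8))"
    unfolding E_def by (rule ib.Hoeffdings_lemma_nn_integral[OF l0])
  have lb: "l\<^sup>2 * (c - 0)\<^sup>2 / 8 = b" using c by (simp add: l_def b_def power2_eq_square field_simps)
  have hh: "nn_integral (P s0 a0) (\<lambda>s'. ennreal (exp (h s'))) \<le> 1"
  proof -
    have "nn_integral (P s0 a0) (\<lambda>s'. ennreal (exp (h s'))) =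
        ennreal (exp (-b)) * nn_integral (P s0 a0) (\<lambda>x. exp (l * (g x - E)))"
      by (subst nn_integral_cmult[symmetric]) (auto simp: h_def exp_diff exp_minus ennreal_mult[symmetric] field_simps exp_add intro!: nn_integral_cong)
    also have "\<dots> \<le> ennreal (exp (-b)) * ennreal (exp b)"
      using hoef lb by (intro mult_left_mono) auto
    also have "\<dots> = 1" by (simp add: ennreal_mult[symmetric] exp_minus)
    finally show ?thesis .
  qed
  have sumF: "(\<Sum>i<m. Fsum s0 a0 h H (D i)) = l * Y D - b * N D" for D
    unfolding Y_def N_def Fsum_def h_def
    by (auto simp: sum_distrib_left sum_subtractf[symmetric] intro!: sum.cong)
  define T where "T = k0 * b"
  have "emeasure (data_pmf d1 P \<mu> H m) {D. k0 \<le> N D \<and> N D * \<epsilon> \<le> Y D}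
      = (\<integral>\<^sup>+D. indicator {D. k0 \<le> N D \<and> N D * \<epsilon> \<le> Y D} D \<partial>data_pmf d1 P \<mu> H m)"
    by simp
  also have "\<dots> \<le> (\<integral>\<^sup>+D. ennreal (exp (-T)) * ennreal (exp (\<Sum>i<m. Fsum s0 a0 h H (D i))) \<partial>data_pmf d1 P \<mu> H m)"
  proof (intro nn_integral_mono)
    fix D
    show "indicator {D. k0 \<le> N D \<and> N D * \<epsilon> \<le> Y D} D \<le> ennreal (exp (-T)) * ennreal (exp (\<Sum>i<m. Fsum s0 a0 h H (D i)))"
    proof (cases "k0 \<le> N D \<and> N D * \<epsilon> \<le> Y D")
      case True
      have "l * (N D * \<epsilon>) \<le> l * Y D" using True l0 by (intro mult_left_mono) auto
      moreover have "l * \<epsilon> = 2 * b" using c by (simp add: l_def b_def power2_eq_square field_simps)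
      moreover have "k0 * b \<le> N D * b" using True b0 by (intro mult_right_mono) auto
      ultimately have f: "l * (N D * \<epsilon>) = 2 * (N D * b)" "k0 * b \<le> N D * b" "l * (N D * \<epsilon>) \<le> l * Y D"
        by (simp_all add: algebra_simps)
      have "k0 * b \<le> l * Y D - N D * b" using f by linarith
      hence "T \<le> l * Y D - b * N D" unfolding T_def by (simp add: mult.commute)
      hence "1 \<le> exp (-T) * exp (\<Sum>i<m. Fsum s0 a0 h H (D i))"
        by (simp add: sumF exp_minus field_simps)
      hence "ennreal 1 \<le> ennreal (exp (-T) * exp (\<Sum>i<m. Fsum s0 a0 h H (D i)))"
        using ennreal_leI by blast
      thus ?thesis using True by (simp add: ennreal_mult[symmetric])
    qed simp
  qed
  also have "\<dots> = ennreal (exp (-T)) * (\<integral>\<^sup>+D. ennreal (exp (\<Sum>i<m. Fsum s0 a0 h H (D i))) \<partial>data_pmf d1 P \<mu> H m)"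
    by (rule nn_integral_cmult) simp
  also have "\<dots> \<le> ennreal (exp (-T)) * 1"
    by (intro mult_left_mono data_exp[where P=P and ?s0.0=s0 and ?a0.0=a0 and h=h, OF hh]) simp
  finally have "ennreal (measure_pmf.prob (data_pmf d1 P \<mu> H m) {D. k0 \<le> N D \<and> N D * \<epsilon> \<le> Y D}) \<le> ennreal (exp (-T))"
    by (simp add: measure_pmf.emeasure_eq_measure)
  hence "measure_pmf.prob (data_pmf d1 P \<mu> H m) {D. k0 \<le> N D \<and> N D * \<epsilon> \<le> Y D} \<le> exp (-T)"
    by (simp add: ennreal_le_iff)
  thus ?thesis unfolding T_def b_def N_def Y_def E_def by simp
qed


lemma visit_count_sum:
  "real (visit_count H m D s a) = (\<Sum>i<m. \<Sum>u=1..H. if ep_state (D i) u = s \<and> ep_action (D i) u = a then 1 else 0)"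
proof -
  have eq: "{(i, u). i < m \<and> u \<in> {1..H} \<and> ep_state (D i) u = s \<and> ep_action (D i) u = a}
      = Sigma {..<m} (\<lambda>i. {u \<in> {1..H}. ep_state (D i) u = s \<and> ep_action (D i) u = a})" by auto
  have "real (visit_count H m D s a) = (\<Sum>i<m. real (card {u \<in> {1..H}. ep_state (D i) u = s \<and> ep_action (D i) u = a}))"
    unfolding visit_count_def eq by (simp add: card_SigmaI)
  also have "\<dots> = (\<Sum>i<m. \<Sum>u=1..H. if ep_state (D i) u = s \<and> ep_action (D i) u = a then 1 else 0)"
    by (intro sum.cong refl) (simp add: sum.inter_filter[symmetric])
  finally show ?thesis .
qed

lemma sum_ind_split:
  "(\<Sum>i<m. \<Sum>u=1..H. if Q i u then f i u - e else 0) =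
   (\<Sum>i<m. \<Sum>u=1..H. if Q i u then f i u else 0) - e * (\<Sum>i<m. \<Sum>u=1..H. if Q i u then 1 else (0::real))"
  by (auto simp: sum_distrib_left sum_subtractf[symmetric] intro!: sum.cong)

lemma mean_dev:
  fixes P :: "'s::finite \<Rightarrow> 'a \<Rightarrow> 's pmf" and \<mu> :: "nat \<Rightarrow> 's \<Rightarrow> 'a pmf" and g :: "'s \<Rightarrow> real"
  assumes g: "\<And>s. 0 \<le> g s \<and> g s \<le> c" and c: "c > 0" and x: "x > 0" and L: "L > 0"
  shows "measure_pmf.prob (data_pmf d1 P \<mu> H m)
     {D. x / 2 < real (visit_count H m D s0 a0) \<and>
         2 * c * sqrt (L / x) < \<bar>(\<Sum>i<m. \<Sum>u=1..H. if ep_state (D i) u = s0 \<and> ep_action (D i) u = a0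
                 then g (ep_state (D i) (Suc u)) else 0) / real (visit_count H m D s0 a0)
              - measure_pmf.expectation (P s0 a0) g\<bar>}
     \<le> 2 * exp (- (4 * L))"
proof -
  define \<epsilon> where "\<epsilon> = 2 * c * sqrt (L / x)"
  have e: "\<epsilon> > 0" using c x L by (simp add: \<epsilon>_def)
  define g' where "g' s = c - g s" for s
  have g': "\<And>s. 0 \<le> g' s \<and> g' s \<le> c" using g by (simp add: g'_def)
  define E where "E = measure_pmf.expectation (P s0 a0) g"
  have E': "measure_pmf.expectation (P s0 a0) g' = c - E"
    unfolding g'_def E_def
    by (simp add: Bochner_Integration.integral_diff integrable_measure_pmf_finite)
  define N where "N D = (\<Sum>i<m. \<Sum>u=1..H. if ep_state (D i) u = s0 \<and> ep_action (D i) u = a0 then 1 else (0::real))" for D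
  define Num where "Num D = (\<Sum>i<m. \<Sum>u=1..H. if ep_state (D i) u = s0 \<and> ep_action (D i) u = a0
                 then g (ep_state (D i) (Suc u)) else 0)" for D
  define A where "A = {D. x/2 \<le> N D \<and> N D * \<epsilon>
          \<le> (\<Sum>i<m. \<Sum>u=1..H. if ep_state (D i) u = s0 \<and> ep_action (D i) u = a0
                 then g (ep_state (D i) (Suc u)) - measure_pmf.expectation (P s0 a0) g else 0)}"
  define B where "B = {D. x/2 \<le> N D \<and> N D * \<epsilon>
          \<le> (\<Sum>i<m. \<Sum>u=1..H. if ep_state (D i) u = s0 \<and> ep_action (D i) u = a0
                 then g' (ep_state (D i) (Suc u)) - measure_pmf.expectation (P s0 a0) g' else 0)}"
  have val: "x / 2 * (2 * \<epsilon>\<^sup>2 / c\<^sup>2) = 4 * L"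
    using c x L by (simp add: \<epsilon>_def power2_eq_square field_simps)
  have pA: "measure_pmf.prob (data_pmf d1 P \<mu> H m) A \<le> exp (- (4 * L))"
    using tail[OF g c e, where P=P and ?d1.0=d1 and \<mu>=\<mu> and H=H and m=m and ?k0.0="x/2" and ?s0.0=s0 and ?a0.0=a0] unfolding A_def N_def val by simp
  have pB: "measure_pmf.prob (data_pmf d1 P \<mu> H m) B \<le> exp (- (4 * L))"
    using tail[OF g' c e, where P=P and ?d1.0=d1 and \<mu>=\<mu> and H=H and m=m and ?k0.0="x/2" and ?s0.0=s0 and ?a0.0=a0] unfolding B_def N_def val by simp
  have YA: "(\<Sum>i<m. \<Sum>u=1..H. if ep_state (D i) u = s0 \<and> ep_action (D i) u = a0
                 then g (ep_state (D i) (Suc u)) - measure_pmf.expectation (P s0 a0) g else 0) = Num D - E * N D" for D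
    unfolding Num_def N_def E_def by (rule sum_ind_split)
  have YB: "(\<Sum>i<m. \<Sum>u=1..H. if ep_state (D i) u = s0 \<and> ep_action (D i) u = a0
                 then g' (ep_state (D i) (Suc u)) - measure_pmf.expectation (P s0 a0) g' else 0) = E * N D - Num D" for D
  proof -
    have "(\<Sum>i<m. \<Sum>u=1..H. if ep_state (D i) u = s0 \<and> ep_action (D i) u = a0
                 then g' (ep_state (D i) (Suc u)) - measure_pmf.expectation (P s0 a0) g' else 0)
       = (\<Sum>i<m. \<Sum>u=1..H. if ep_state (D i) u = s0 \<and> ep_action (D i) u = a0
                 then E - g (ep_state (D i) (Suc u)) else 0)"
      unfolding E' g'_def by (intro sum.cong refl) simp
    also have "\<dots> = E * N D - Num D"
      unfolding Num_def N_def
      by (auto simp: sum_distrib_left sum_subtractf[symmetric] intro!: sum.cong)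
    finally show ?thesis .
  qed
  have sub: "{D. x / 2 < real (visit_count H m D s0 a0) \<and>
         2 * c * sqrt (L / x) < \<bar>(\<Sum>i<m. \<Sum>u=1..H. if ep_state (D i) u = s0 \<and> ep_action (D i) u = a0
                 then g (ep_state (D i) (Suc u)) else 0) / real (visit_count H m D s0 a0)
              - measure_pmf.expectation (P s0 a0) g\<bar>} \<subseteq> A \<union> B"
  proof
    fix D assume "D \<in> {D. x / 2 < real (visit_count H m D s0 a0) \<and>
         2 * c * sqrt (L / x) < \<bar>(\<Sum>i<m. \<Sum>u=1..H. if ep_state (D i) u = s0 \<and> ep_action (D i) u = a0
                 then g (ep_state (D i) (Suc u)) else 0) / real (visit_count H m D s0 a0)
              - measure_pmf.expectation (P s0 a0) g\<bar>}"
    hence h1: "x / 2 < N D" and h2: "\<epsilon> < \<bar>Num D / N D - E\<bar>"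
      by (simp_all add: visit_count_sum N_def Num_def E_def \<epsilon>_def)
    have Npos: "N D > 0" using h1 x by linarith
    show "D \<in> A \<union> B"
    proof (cases "Num D / N D - E \<ge> 0")
      case True
      hence "\<epsilon> < Num D / N D - E" using h2 by simp
      hence "\<epsilon> * N D < Num D - E * N D" using Npos by (simp add: field_simps)
      thus ?thesis using h1 unfolding A_def YA by (simp add: mult.commute)
    next
      case False
      hence "\<epsilon> < E - Num D / N D" using h2 by simp
      hence "\<epsilon> * N D < E * N D - Num D" using Npos by (simp add: field_simps)
      thus ?thesis using h1 unfolding B_def YB by (simp add: mult.commute)
    qed
  qed
  have "measure_pmf.prob (data_pmf d1 P \<mu> H m) {D. x / 2 < real (visit_count H m D s0 a0) \<and>
         2 * c * sqrt (L / x) < \<bar>(\<Sum>i<m. \<Sum>u=1..H. if ep_state (D i) u = s0 \<and> ep_action (D i) u = a0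
                 then g (ep_state (D i) (Suc u)) else 0) / real (visit_count H m D s0 a0)
              - measure_pmf.expectation (P s0 a0) g\<bar>} \<le> measure_pmf.prob (data_pmf d1 P \<mu> H m) (A \<union> B)"
    by (rule measure_pmf.finite_measure_mono[OF sub]) simp
  also have "\<dots> \<le> measure_pmf.prob (data_pmf d1 P \<mu> H m) A + measure_pmf.prob (data_pmf d1 P \<mu> H m) B"
    by (rule measure_Un_le) simp_all
  also have "\<dots> \<le> 2 * exp (- (4 * L))" using pA pB by simp
  finally show ?thesis .
qed


lemma var_alg:
  fixes e1 e2 E1 E2 Hh r :: real
  assumes "0 \<le> e1" "e1 \<le> Hh" "0 \<le> E1" "E1 \<le> Hh"
    and "\<bar>e1 - E1\<bar> \<le> 2 * Hh * r" "\<bar>e2 - E2\<bar> \<le> 2 * Hh\<^sup>2 * r"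
  shows "\<bar>(e2 - e1\<^sup>2) - (E2 - E1\<^sup>2)\<bar> \<le> 6 * Hh\<^sup>2 * r"
proof -
  have "\<bar>e1\<^sup>2 - E1\<^sup>2\<bar> = \<bar>e1 - E1\<bar> * \<bar>e1 + E1\<bar>"
    by (simp add: power2_eq_square abs_mult[symmetric] algebra_simps)
  also have "\<dots> \<le> (2 * Hh * r) * (2 * Hh)"
    using assms by (intro mult_mono) auto
  finally have "\<bar>e1\<^sup>2 - E1\<^sup>2\<bar> \<le> 4 * Hh\<^sup>2 * r" by (simp add: power2_eq_square algebra_simps)
  thus ?thesis using assms(6) by (simp add: abs_le_iff)
qed

lemma pointwise:
  fixes d1 :: "'s::finite pmf" and P :: "'s \<Rightarrow> 'a \<Rightarrow> 's pmf" and \<mu> :: "nat \<Rightarrow> 's \<Rightarrow> 'a pmf"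
    and V :: "'s \<Rightarrow> real"
  assumes V: "\<And>s. 0 \<le> V s \<and> V s \<le> real H"
    and d: "(\<Sum>t'=1..H. occ d1 P \<mu> H t' s a) > 0" and L: "L \<ge> 0"
    and nb: "0 < m \<Longrightarrow>
       \<not> (real m * (\<Sum>t'=1..H. occ d1 P \<mu> H t' s a) / 2 < real (visit_count H m D s a) \<and>
            2 * real H * sqrt (L / (real m * (\<Sum>t'=1..H. occ d1 P \<mu> H t' s a)))
             < \<bar>emp_moment H m D V 1 s a - measure_pmf.expectation (P s a) V\<bar>) \<and>
       \<not> (real m * (\<Sum>t'=1..H. occ d1 P \<mu> H t' s a) / 2 < real (visit_count H m D s a) \<and>
            2 * real H ^ 2 * sqrt (L / (real m * (\<Sum>t'=1..H. occ d1 P \<mu> H t' s a)))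
             < \<bar>emp_moment H m D V 2 s a - measure_pmf.expectation (P s a) (\<lambda>x. V x ^ 2)\<bar>)"
  shows "\<bar>sigma_tilde d1 P \<mu> H m D V s a - sigmaV P V s a\<bar>
              \<le> 6 * real H ^ 2 * sqrt (L / (real m * (\<Sum>t'=1..H. occ d1 P \<mu> H t' s a)))
                + 4 * real H ^ 2 * L / (real m * (\<Sum>t'=1..H. occ d1 P \<mu> H t' s a))"
proof -
  define dd where "dd = (\<Sum>t'=1..H. occ d1 P \<mu> H t' s a)"
  define n where "n = real (visit_count H m D s a)"
  have rhs0: "0 \<le> 6 * real H ^ 2 * sqrt (L / (real m * dd)) + 4 * real H ^ 2 * L / (real m * dd)"
    using d L unfolding dd_def by (intro add_nonneg_nonneg mult_nonneg_nonneg divide_nonneg_nonneg) auto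
  show ?thesis
  proof (cases "n \<le> 1/2 * real m * dd")
    case True
    hence "sigma_tilde d1 P \<mu> H m D V s a = sigmaV P V s a"
      unfolding sigma_tilde_def n_def dd_def by simp
    thus ?thesis using rhs0 unfolding dd_def by simp
  next
    case False
    hence gt: "real m * dd / 2 < n" by simp
    have m0: "0 < m"
    proof (rule ccontr)
      assume "\<not> 0 < m"
      hence "m = 0" by simp
      hence "n = 0" by (simp add: n_def visit_count_def)
      thus False using gt \<open>m = 0\<close> by simp
    qed
    have "real m * dd > 0" using m0 d unfolding dd_def by simp
    hence npos: "n > 0" using gt by linarith
    define r where "r = sqrt (L / (real m * dd))"
    define E1 where "E1 = measure_pmf.expectation (P s a) V"
    define E2 where "E2 = measure_pmf.expectation (P s a) (\<lambda>x. V x ^ 2)"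
    define e1 where "e1 = emp_moment H m D V 1 s a"
    define e2 where "e2 = emp_moment H m D V 2 s a"
    have b1: "\<bar>e1 - E1\<bar> \<le> 2 * real H * r" and b2: "\<bar>e2 - E2\<bar> \<le> 2 * (real H)\<^sup>2 * r"
    proof -
      have "\<not> (2 * real H * r < \<bar>e1 - E1\<bar>) \<and> \<not> (2 * real H ^ 2 * r < \<bar>e2 - E2\<bar>)"
        using nb[OF m0] gt unfolding e1_def E1_def e2_def E2_def r_def n_def dd_def by blast
      thus "\<bar>e1 - E1\<bar> \<le> 2 * real H * r" "\<bar>e2 - E2\<bar> \<le> 2 * (real H)\<^sup>2 * r" by linarith+
    qed
    define Num where "Num = (\<Sum>i<m. \<Sum>u=1..H. if ep_state (D i) u = s \<and> ep_action (D i) u = a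
                          then V (ep_state (D i) (Suc u)) else 0)"
    have e1eq: "e1 = Num / n" unfolding e1_def Num_def n_def emp_moment_def power_one_right ..
    have Num0: "0 \<le> Num" unfolding Num_def using V by (intro sum_nonneg) auto
    have "Num \<le> (\<Sum>i<m. \<Sum>u=1..H. if ep_state (D i) u = s \<and> ep_action (D i) u = a then real H else 0)"
      unfolding Num_def using V by (intro sum_mono) auto
    also have "\<dots> = real H * n" unfolding n_def visit_count_sum
      by (auto simp: sum_distrib_left intro!: sum.cong)
    finally have NumH: "Num \<le> real H * n" .
    have e1b: "0 \<le> e1" "e1 \<le> real H" using Num0 NumH npos unfolding e1eq
      by (auto simp: field_simps)
    have intV: "integrable (measure_pmf (P s a)) f" for f :: "'s \<Rightarrow> real"
      by (rule integrable_measure_pmf_finite) simp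
    have E1b: "0 \<le> E1" "E1 \<le> real H"
    proof -
      show "0 \<le> E1" unfolding E1_def using V by (intro Bochner_Integration.integral_nonneg) auto
      have "E1 \<le> measure_pmf.expectation (P s a) (\<lambda>_. real H)"
        unfolding E1_def using V by (intro integral_mono intV) auto
      thus "E1 \<le> real H" by simp
    qed
    have sig: "sigmaV P V s a = E2 - E1\<^sup>2"
      unfolding sigmaV_def E1_def E2_def
      by (rule measure_pmf.variance_eq) (simp_all add: intV)
    have st: "sigma_tilde d1 P \<mu> H m D V s a = e2 - e1\<^sup>2"
      using False unfolding sigma_tilde_def e1_def e2_def n_def dd_def by simp
    have "\<bar>sigma_tilde d1 P \<mu> H m D V s a - sigmaV P V s a\<bar> \<le> 6 * (real H)\<^sup>2 * r"
      unfolding st sig by (rule var_alg[OF e1b E1b b1 b2])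
    also have "\<dots> \<le> 6 * real H ^ 2 * r + 4 * real H ^ 2 * L / (real m * dd)"
      using d L m0 unfolding dd_def by simp
    finally show ?thesis unfolding r_def dd_def .
  qed
qed


lemma prodge1: "H \<ge> 1 \<Longrightarrow> 1 \<le> real H * real CARD('s::finite) * real CARD('a::finite)"
proof -
  assume H: "H \<ge> 1"
  have a: "1 \<le> real H" using H by simp
  have b: "1 \<le> real CARD('s)" by (simp add: Suc_le_eq)
  have c: "1 \<le> real CARD('a)" by (simp add: Suc_le_eq)
  have "1 * 1 \<le> real H * real CARD('s)" using a b by (intro mult_mono) auto
  hence "1 * 1 \<le> real H * real CARD('s) * real CARD('a)" using c by (intro mult_mono) auto
  thus ?thesis by simp
qed

theorem lemmaC2:
  fixes d1 :: "'s::finite pmf" and P :: "'s \<Rightarrow> 'a::finite \<Rightarrow> 's pmf"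
    and \<mu> :: "nat \<Rightarrow> 's \<Rightarrow> 'a pmf" and H m :: nat
    and Vin :: "nat \<Rightarrow> 's \<Rightarrow> real" and \<delta> :: real
  assumes "0 < \<delta>" "\<delta> < 1"
    and "\<And>t s. t \<in> {1..H} \<Longrightarrow> 0 \<le> Vin (Suc t) s \<and> Vin (Suc t) s \<le> real H"
  shows "measure_pmf.prob (data_pmf d1 P \<mu> H m)
           {D. \<forall>t\<in>{1..H}. \<forall>s a. (\<Sum>t'=1..H. occ d1 P \<mu> H t' s a) > 0 \<longrightarrow>
              \<bar>sigma_tilde d1 P \<mu> H m D (Vin (Suc t)) s a - sigmaV P (Vin (Suc t)) s a\<bar>
              \<le> 6 * real H ^ 2 * sqrt (ln (4 * real H * real CARD('s) * real CARD('a) / \<delta>)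
                                       / (real m * (\<Sum>t'=1..H. occ d1 P \<mu> H t' s a)))
                + 4 * real H ^ 2 * ln (4 * real H * real CARD('s) * real CARD('a) / \<delta>)
                                       / (real m * (\<Sum>t'=1..H. occ d1 P \<mu> H t' s a))}
         \<ge> 1 - \<delta>"
proof -
  note d0 = assms(1) and d1' = assms(2) and Vb = assms(3)
  define L where "L = ln (4 * real H * real CARD('s) * real CARD('a) / \<delta>)"
  define dsum where "dsum s a = (\<Sum>t'=1..H. occ d1 P \<mu> H t' s a)" for s a
  define M where "M = data_pmf d1 P \<mu> H m"
  define G where "G = {D. \<forall>t\<in>{1..H}. \<forall>s a. (\<Sum>t'=1..H. occ d1 P \<mu> H t' s a) > 0 \<longrightarrow>
              \<bar>sigma_tilde d1 P \<mu> H m D (Vin (Suc t)) s a - sigmaV P (Vin (Suc t)) s a\<bar>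
              \<le> 6 * real H ^ 2 * sqrt (ln (4 * real H * real CARD('s) * real CARD('a) / \<delta>)
                                       / (real m * (\<Sum>t'=1..H. occ d1 P \<mu> H t' s a)))
                + 4 * real H ^ 2 * ln (4 * real H * real CARD('s) * real CARD('a) / \<delta>)
                                       / (real m * (\<Sum>t'=1..H. occ d1 P \<mu> H t' s a))}"
  define B1 where "B1 t s a = {D. real m * dsum s a / 2 < real (visit_count H m D s a) \<and>
            2 * real H * sqrt (L / (real m * dsum s a))
             < \<bar>emp_moment H m D (Vin (Suc t)) 1 s a - measure_pmf.expectation (P s a) (Vin (Suc t))\<bar>}" for t s a
  define B2 where "B2 t s a = {D. real m * dsum s a / 2 < real (visit_count H m D s a) \<and>
            2 * real H ^ 2 * sqrt (L / (real m * dsum s a))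
             < \<bar>emp_moment H m D (Vin (Suc t)) 2 s a - measure_pmf.expectation (P s a) (\<lambda>x. Vin (Suc t) x ^ 2)\<bar>}" for t s a
  define bad where "bad = (\<lambda>(t, s, a). if 0 < m \<and> 0 < dsum s a then B1 t s a \<union> B2 t s a else {})"
  define I where "I = {1..H} \<times> (UNIV :: 's set) \<times> (UNIV :: 'a set)"
  have cover: "UNIV - G \<subseteq> (\<Union>i\<in>I. bad i)"
  proof
    fix D assume DG: "D \<in> UNIV - G"
    show "D \<in> (\<Union>i\<in>I. bad i)"
    proof (rule ccontr)
      assume nb: "D \<notin> (\<Union>i\<in>I. bad i)"
      have "D \<in> G"
        unfolding G_def
      proof (intro CollectI ballI allI impI)
        fix t s a assume t: "t \<in> {1..H}" and d: "0 < (\<Sum>t'=1..H. occ d1 P \<mu> H t' s a)"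
        have H1: "H \<ge> 1" using t by simp
        have "1 < 4 * real H * real CARD('s) * real CARD('a) / \<delta>"
        proof -
          have "1 \<le> real H * real CARD('s) * real CARD('a)"
            using prodge1[OF H1] by simp
          hence "\<delta> < 4 * real H * real CARD('s) * real CARD('a)" using d1' by linarith
          thus ?thesis using d0 by (simp add: field_simps)
        qed
        hence L0: "L \<ge> 0" unfolding L_def by simp
        have nbi: "D \<notin> bad (t, s, a)" using nb t unfolding I_def by blast
        show "\<bar>sigma_tilde d1 P \<mu> H m D (Vin (Suc t)) s a - sigmaV P (Vin (Suc t)) s a\<bar>
              \<le> 6 * real H ^ 2 * sqrt (ln (4 * real H * real CARD('s) * real CARD('a) / \<delta>)
                                       / (real m * (\<Sum>t'=1..H. occ d1 P \<mu> H t' s a)))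
                + 4 * real H ^ 2 * ln (4 * real H * real CARD('s) * real CARD('a) / \<delta>)
                                       / (real m * (\<Sum>t'=1..H. occ d1 P \<mu> H t' s a))"
          unfolding L_def[symmetric]
        proof (rule pointwise[OF _ d L0])
          show "\<And>s. 0 \<le> Vin (Suc t) s \<and> Vin (Suc t) s \<le> real H" using Vb[OF t] .
          assume m0: "0 < m"
          show "\<not> (real m * (\<Sum>t'=1..H. occ d1 P \<mu> H t' s a) / 2 < real (visit_count H m D s a) \<and>
            2 * real H * sqrt (L / (real m * (\<Sum>t'=1..H. occ d1 P \<mu> H t' s a)))
             < \<bar>emp_moment H m D (Vin (Suc t)) 1 s a - measure_pmf.expectation (P s a) (Vin (Suc t))\<bar>) \<and>
            \<not> (real m * (\<Sum>t'=1..H. occ d1 P \<mu> H t' s a) / 2 < real (visit_count H m D s a) \<and>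
            2 * real H ^ 2 * sqrt (L / (real m * (\<Sum>t'=1..H. occ d1 P \<mu> H t' s a)))
             < \<bar>emp_moment H m D (Vin (Suc t)) 2 s a - measure_pmf.expectation (P s a) (\<lambda>x. Vin (Suc t) x ^ 2)\<bar>)"
            using nbi m0 d unfolding bad_def B1_def B2_def dsum_def by auto
        qed
      qed
      thus False using DG by simp
    qed
  qed
  have pbad: "measure_pmf.prob M (bad i) \<le> \<delta> / (real H * real CARD('s) * real CARD('a))" if i: "i \<in> I" for i
  proof -
    obtain t s a where ti: "i = (t, s, a)" by (cases i) auto
    have t: "t \<in> {1..H}" using i ti unfolding I_def by simp
    have H1: "H \<ge> 1" using t by simp
    define K where "K = real H * real CARD('s) * real CARD('a)"
    have K1: "1 \<le> K" using prodge1[OF H1] by (simp add: K_def)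
    have "1 < 4 * K / \<delta>"
    proof -
      have "\<delta> < 4 * K" using d1' K1 by linarith
      thus ?thesis using d0 by (simp add: field_simps)
    qed
    hence Lpos: "L > 0" unfolding L_def K_def by (simp add: mult.assoc)
    have expL: "exp (- L) = \<delta> / (4 * K)"
    proof -
      have "exp L = 4 * K / \<delta>" unfolding L_def K_def using d0 K1 K_def
        by (subst exp_ln) (auto simp: mult.assoc)
      thus ?thesis using d0 K1 by (simp add: exp_minus)
    qed
    have "exp (- (4 * L)) \<le> exp (- L)" using Lpos by simp
    hence e4: "exp (- (4 * L)) \<le> \<delta> / (4 * K)" using expL by simp
    show ?thesis
    proof (cases "0 < m \<and> 0 < dsum s a")
      case False
      hence "bad i = {}" unfolding ti bad_def by auto
      thus ?thesis using d0 K1 by (simp add: K_def)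
    next
      case True
      define x where "x = real m * dsum s a"
      have x0: "x > 0" using True by (simp add: x_def)
      have H0: "real H > 0" using H1 by simp
      have V1: "\<And>z. 0 \<le> Vin (Suc t) z \<and> Vin (Suc t) z \<le> real H" using Vb[OF t] .
      have V2: "\<And>z. 0 \<le> Vin (Suc t) z ^ 2 \<and> Vin (Suc t) z ^ 2 \<le> real H ^ 2"
        using V1 by (simp add: power_mono)
      have p1: "measure_pmf.prob M (B1 t s a) \<le> 2 * exp (- (4 * L))"
        using mean_dev[OF V1 H0 x0 Lpos, where P=P and ?d1.0=d1 and \<mu>=\<mu> and H=H and m=m and ?s0.0=s and ?a0.0=a]
        unfolding M_def B1_def x_def emp_moment_def power_one_right by simp
      have p2: "measure_pmf.prob M (B2 t s a) \<le> 2 * exp (- (4 * L))"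
        using mean_dev[OF V2 _ x0 Lpos, where P=P and ?d1.0=d1 and \<mu>=\<mu> and H=H and m=m and ?s0.0=s and ?a0.0=a] H0
        unfolding M_def B2_def x_def emp_moment_def by simp
      have "measure_pmf.prob M (bad i) \<le> measure_pmf.prob M (B1 t s a) + measure_pmf.prob M (B2 t s a)"
        unfolding ti bad_def using True by (simp add: measure_Un_le)
      also have "\<dots> \<le> 4 * (\<delta> / (4 * K))" using p1 p2 e4 by linarith
      also have "\<dots> = \<delta> / K" by simp
      finally show ?thesis unfolding K_def .
    qed
  qed
  have "measure_pmf.prob M (UNIV - G) \<le> measure_pmf.prob M (\<Union>i\<in>I. bad i)"
    by (rule measure_pmf.finite_measure_mono[OF cover]) simp
  also have "\<dots> \<le> (\<Sum>i\<in>I. measure_pmf.prob M (bad i))"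
    by (rule measure_pmf.finite_measure_subadditive_finite) (auto simp: I_def)
  also have "\<dots> \<le> real (card I) * (\<delta> / (real H * real CARD('s) * real CARD('a)))"
    using pbad by (rule sum_bounded_above)
  also have "\<dots> \<le> \<delta>"
  proof (cases "H = 0")
    case True thus ?thesis using d0 by (simp add: I_def)
  next
    case False
    thus ?thesis by (simp add: I_def card_cartesian_product)
  qed
  finally have cG: "measure_pmf.prob M (UNIV - G) \<le> \<delta>" .
  have "measure_pmf.prob M G = 1 - measure_pmf.prob M (UNIV - G)"
    using measure_pmf.prob_compl[of "UNIV - G" M] by (simp add: Diff_Diff_Int)
  thus ?thesis using cG unfolding M_def G_def by linarith
qed

end
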